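(* Let $G$ be a graph, $k$ a positive integer, and $V_1,\dots,V_t$ a partition of $V(G)$ into types as described in the context. If $G$ has a star coloring using at most $k$ colors, then the integer program $\mathrm{ILP}(G,k,V_1,\dots,V_t)$ described in the context has a feasible assignment.
   Context: All graphs are finite, simple, undirected and connected. A star coloring of $G$ with at most $k$ colors is a map $f:V(G)\to\{1,\dots,k\}$ with $f(u)\neq f(v)$ for every edge $uv$ such that every path on four vertices (not necessarily induced) receives at least three distinct colors. Two vertices $u,v$ have the same type if $N(u)\setminus\{v\}=N(v)\setminus\{u\}$; $V_1,\dots,V_t$ is a partition of $V(G)$ into nonempty sets in each of which all vertices pairwise have the same type. Then each $G[V_i]$ is a clique or an independent set; $V_i$ is called a clique type if $G[V_i]$ is complete and an independent type if $G[V_i]$ has no edges. For $i\neq j$, either every vertex of $V_i$ is adjacent to every vertex of $V_j$ (write $V_j\in adj(V_i)$) or there are no edges between them. For $A\subseteq[t]$ let $T_A=\{V_i: i\in A\}$. The program $\mathrm{ILP}(G,k,V_1,\dots,V_t)$ has one integer variable $n_A$ for every $A\subseteq[t]$ and the following constraints: (C0) $n_A=0$ (the variable is discarded) whenever $T_A$ contains two types $V_i,V_j$ with $V_j\in adj(V_i)$; (C1) $\sum_{A\subseteq[t]} n_A\le k$; (C2) for each clique type $V_i$: $\sum_{A: V_i\in T_A} n_A=|V_i|$; (C3) for each independent type $V_i$: $1\le \sum_{A:V_i\in T_A} n_A\le \min\{k,|V_i|\}$; (C4) for every four distinct types $V_{i_1},V_{i_2},V_{i_3},V_{i_4}$ with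 $V_{i_1},V_{i_3}\in adj(V_{i_2})$ and $V_{i_4}\in adj(V_{i_3})$: if $\sum_{A: V_{i_1},V_{i_3}\in T_A} n_A\ge 1$ then $\sum_{B: V_{i_2},V_{i_4}\in T_B} n_B=0$; (C5) for every three distinct types $V_{i_1},V_{i_2},V_{i_3}$ with $V_{i_1}$ an independent type and $V_{i_2},V_{i_3}\in adj(V_{i_1})$: if $\sum_{A:V_{i_1}\in T_A} n_A<|V_{i_1}|$ then $\sum_{B: V_{i_2},V_{i_3}\in T_B} n_B=0$; (C6) for every two distinct independent types $V_{i_1},V_{i_2}$ with $V_{i_1}\in adj(V_{i_2})$: if $\sum_{A:V_{i_1}\in T_A} n_A<|V_{i_1}|$ then $\sum_{B:V_{i_2}\in T_B} n_B=|V_{i_2}|$, and symmetrically with $i_1,i_2$ swapped; (C7) $n_A\ge 0$ for all $A\subseteq[t]$. A feasible assignment is an assignment of integer values to all $n_A$ satisfying (C0)–(C7). *)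

theory Defs
  imports Main
begin

definition simple_graph :: "'a set \<Rightarrow> ('a \<Rightarrow> 'a \<Rightarrow> bool) \<Rightarrow> bool" where
  "simple_graph V E \<longleftrightarrow> finite V \<and> V \<noteq> {} \<and>
     (\<forall>u v. E u v \<longrightarrow> u \<in> V \<and> v \<in> V) \<and>
     (\<forall>u v. E u v \<longrightarrow> E v u) \<and> (\<forall>v. \<not> E v v)"

definition connected_graph :: "'a set \<Rightarrow> ('a \<Rightarrow> 'a \<Rightarrow> bool) \<Rightarrow> bool" where
  "connected_graph V E \<longleftrightarrow> (\<forall>u\<in>V. \<forall>v\<in>V. E\<^sup>*\<^sup>* u v)"

definition nbhd :: "'a set \<Rightarrow> ('a \<Rightarrow> 'a \<Rightarrow> bool) \<Rightarrow> 'a \<Rightarrow> 'a set" where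
  "nbhd V E v = {u \<in> V. E v u}"

definition star_coloring :: "'a set \<Rightarrow> ('a \<Rightarrow> 'a \<Rightarrow> bool) \<Rightarrow> nat \<Rightarrow> ('a \<Rightarrow> nat) \<Rightarrow> bool" where
  "star_coloring V E k f \<longleftrightarrow>
     (\<forall>v\<in>V. f v \<in> {1..k}) \<and>
     (\<forall>u v. E u v \<longrightarrow> f u \<noteq> f v) \<and>
     (\<forall>a b c d. distinct [a, b, c, d] \<and> E a b \<and> E b c \<and> E c d \<longrightarrow>
        card {f a, f b, f c, f d} \<ge> 3)"

definition same_type :: "'a set \<Rightarrow> ('a \<Rightarrow> 'a \<Rightarrow> bool) \<Rightarrow> 'a \<Rightarrow> 'a \<Rightarrow> bool" where
  "same_type V E u v \<longleftrightarrow> nbhd V E u - {v} = nbhd V E v - {u}"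

definition type_partition :: "'a set \<Rightarrow> ('a \<Rightarrow> 'a \<Rightarrow> bool) \<Rightarrow> nat \<Rightarrow> (nat \<Rightarrow> 'a set) \<Rightarrow> bool" where
  "type_partition V E t Vs \<longleftrightarrow>
     (\<forall>i\<in>{1..t}. Vs i \<noteq> {}) \<and>
     (\<forall>i\<in>{1..t}. \<forall>j\<in>{1..t}. i \<noteq> j \<longrightarrow> Vs i \<inter> Vs j = {}) \<and>
     (\<Union>i\<in>{1..t}. Vs i) = V \<and>
     (\<forall>i\<in>{1..t}. \<forall>u\<in>Vs i. \<forall>v\<in>Vs i. same_type V E u v)"

definition clique_type :: "('a \<Rightarrow> 'a \<Rightarrow> bool) \<Rightarrow> (nat \<Rightarrow> 'a set) \<Rightarrow> nat \<Rightarrow> bool" where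
  "clique_type E Vs i \<longleftrightarrow> (\<forall>u\<in>Vs i. \<forall>v\<in>Vs i. u \<noteq> v \<longrightarrow> E u v)"

definition indep_type :: "('a \<Rightarrow> 'a \<Rightarrow> bool) \<Rightarrow> (nat \<Rightarrow> 'a set) \<Rightarrow> nat \<Rightarrow> bool" where
  "indep_type E Vs i \<longleftrightarrow> (\<forall>u\<in>Vs i. \<forall>v\<in>Vs i. \<not> E u v)"

text \<open>type_adj E Vs i j: V_j \<in> adj(V_i), i.e. i \<noteq> j and every vertex of V_i is
  adjacent to every vertex of V_j.\<close>
definition type_adj :: "('a \<Rightarrow> 'a \<Rightarrow> bool) \<Rightarrow> (nat \<Rightarrow> 'a set) \<Rightarrow> nat \<Rightarrow> nat \<Rightarrow> bool" where
  "type_adj E Vs i j \<longleftrightarrow> i \<noteq> j \<and> (\<forall>u\<in>Vs i. \<forall>v\<in>Vs j. E u v)"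

definition ssum :: "nat \<Rightarrow> (nat set \<Rightarrow> int) \<Rightarrow> nat set \<Rightarrow> int" where
  "ssum t n S = (\<Sum>A \<in> {A. A \<subseteq> {1..t} \<and> S \<subseteq> A}. n A)"

definition ILP_feasible_assignment ::
  "('a \<Rightarrow> 'a \<Rightarrow> bool) \<Rightarrow> nat \<Rightarrow> nat \<Rightarrow> (nat \<Rightarrow> 'a set) \<Rightarrow> (nat set \<Rightarrow> int) \<Rightarrow> bool" where
  "ILP_feasible_assignment E k t Vs n \<longleftrightarrow>
     \<comment> \<open>C0\<close>
     (\<forall>A. A \<subseteq> {1..t} \<longrightarrow> (\<exists>i\<in>A. \<exists>j\<in>A. type_adj E Vs i j) \<longrightarrow> n A = 0) \<and>
     \<comment> \<open>C1\<close>
     (\<Sum>A \<in> Pow {1..t}. n A) \<le> int k \<and>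
     \<comment> \<open>C2\<close>
     (\<forall>i\<in>{1..t}. clique_type E Vs i \<longrightarrow> ssum t n {i} = int (card (Vs i))) \<and>
     \<comment> \<open>C3\<close>
     (\<forall>i\<in>{1..t}. indep_type E Vs i \<longrightarrow>
        1 \<le> ssum t n {i} \<and> ssum t n {i} \<le> min (int k) (int (card (Vs i)))) \<and>
     \<comment> \<open>C4\<close>
     (\<forall>i1\<in>{1..t}. \<forall>i2\<in>{1..t}. \<forall>i3\<in>{1..t}. \<forall>i4\<in>{1..t}.
        distinct [i1, i2, i3, i4] \<and> type_adj E Vs i2 i1 \<and> type_adj E Vs i2 i3 \<and>
        type_adj E Vs i3 i4 \<longrightarrow>
        ssum t n {i1, i3} \<ge> 1 \<longrightarrow> ssum t n {i2, i4} = 0) \<and>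
     \<comment> \<open>C5\<close>
     (\<forall>i1\<in>{1..t}. \<forall>i2\<in>{1..t}. \<forall>i3\<in>{1..t}.
        distinct [i1, i2, i3] \<and> indep_type E Vs i1 \<and> type_adj E Vs i1 i2 \<and>
        type_adj E Vs i1 i3 \<longrightarrow>
        ssum t n {i1} < int (card (Vs i1)) \<longrightarrow> ssum t n {i2, i3} = 0) \<and>
     \<comment> \<open>C6 (both orientations, as i1 i2 range over all ordered pairs)\<close>
     (\<forall>i1\<in>{1..t}. \<forall>i2\<in>{1..t}.
        i1 \<noteq> i2 \<and> indep_type E Vs i1 \<and> indep_type E Vs i2 \<and> type_adj E Vs i2 i1 \<longrightarrow>
        ssum t n {i1} < int (card (Vs i1)) \<longrightarrow> ssum t n {i2} = int (card (Vs i2))) \<and>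
     \<comment> \<open>C7\<close>
     (\<forall>A. A \<subseteq> {1..t} \<longrightarrow> n A \<ge> 0)"

definition ILP_feasible :: "('a \<Rightarrow> 'a \<Rightarrow> bool) \<Rightarrow> nat \<Rightarrow> nat \<Rightarrow> (nat \<Rightarrow> 'a set) \<Rightarrow> bool" where
  "ILP_feasible E k t Vs \<longleftrightarrow> (\<exists>n. ILP_feasible_assignment E k t Vs n)"

end

theory Submission
  imports Defs
begin

lemma ssum_card:
  fixes AC :: "nat \<Rightarrow> nat set"
  assumes AC: "\<And>c. AC c \<subseteq> {1..t}"
  shows "ssum t (\<lambda>A. int (card {c\<in>{1..k}. AC c = A})) S = int (card {c\<in>{1..k}. S \<subseteq> AC c})"
proof -
  let ?T = "{A. A \<subseteq> {1..t} \<and> S \<subseteq> A}"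
  let ?B = "{c\<in>{1..k}. S \<subseteq> AC c}"
  have fT: "finite ?T" by (rule finite_subset[of _ "Pow {1..t}"]) auto
  have "ssum t (\<lambda>A. int (card {c\<in>{1..k}. AC c = A})) S = int (\<Sum>A\<in>?T. card {c\<in>{1..k}. AC c = A})"
    unfolding ssum_def by simp
  also have "(\<Sum>A\<in>?T. card {c\<in>{1..k}. AC c = A}) = (\<Sum>A\<in>?T. \<Sum>c\<in>{c\<in>?B. AC c = A}. (1::nat))"
  proof (rule sum.cong)
    fix A assume "A \<in> ?T"
    then have "{c\<in>{1..k}. AC c = A} = {c\<in>?B. AC c = A}" by auto
    then show "card {c\<in>{1..k}. AC c = A} = (\<Sum>c\<in>{c\<in>?B. AC c = A}. (1::nat))" by simp
  qed simp
  also have "\<dots> = (\<Sum>c\<in>?B. (1::nat))"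
    by (rule sum.group) (use fT AC in auto)
  finally show ?thesis by simp
qed

theorem lemma2:
  fixes V :: "'a set" and E :: "'a \<Rightarrow> 'a \<Rightarrow> bool" and k t :: nat and Vs :: "nat \<Rightarrow> 'a set"
  assumes "simple_graph V E"
    and "connected_graph V E"
    and "k \<ge> 1"
    and "type_partition V E t Vs"
    and "\<exists>f. star_coloring V E k f"
  shows "ILP_feasible E k t Vs"
proof -
  obtain f where sc: "star_coloring V E k f" using assms(5) by blast
  have fV: "\<And>v. v \<in> V \<Longrightarrow> f v \<in> {1..k}" using sc unfolding star_coloring_def by blast
  have fE: "\<And>u v. E u v \<Longrightarrow> f u \<noteq> f v" using sc unfolding star_coloring_def by blast
  have fP: "\<And>a b c d. distinct [a, b, c, d] \<Longrightarrow> E a b \<Longrightarrow> E b c \<Longrightarrow> E c d \<Longrightarrow>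
        card {f a, f b, f c, f d} \<ge> 3" using sc unfolding star_coloring_def by blast
  have finV: "finite V" and Esym: "\<And>u v. E u v \<Longrightarrow> E v u"
    using assms(1) unfolding simple_graph_def by auto
  have ne: "\<And>i. i \<in> {1..t} \<Longrightarrow> Vs i \<noteq> {}"
    and disj: "\<And>i j. i \<in> {1..t} \<Longrightarrow> j \<in> {1..t} \<Longrightarrow> i \<noteq> j \<Longrightarrow> Vs i \<inter> Vs j = {}"
    and sub: "\<And>i. i \<in> {1..t} \<Longrightarrow> Vs i \<subseteq> V"
    using assms(4) unfolding type_partition_def by blast+
  have fin: "\<And>i. i \<in> {1..t} \<Longrightarrow> finite (Vs i)" using sub finV finite_subset by blast
  define AC where "AC c = {i\<in>{1..t}. c \<in> f ` Vs i}" for c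
  define n where "n A = int (card {c\<in>{1..k}. AC c = A})" for A
  have ACs: "\<And>c. AC c \<subseteq> {1..t}" unfolding AC_def by auto
  have ss: "\<And>S. ssum t n S = int (card {c\<in>{1..k}. S \<subseteq> AC c})"
    unfolding n_def by (rule ssum_card[OF ACs])
  have colk: "\<And>i. i \<in> {1..t} \<Longrightarrow> f ` Vs i \<subseteq> {1..k}" using sub fV by blast
  have s1: "\<And>i. i \<in> {1..t} \<Longrightarrow> ssum t n {i} = int (card (f ` Vs i))"
  proof -
    fix i assume i: "i \<in> {1..t}"
    have "{c\<in>{1..k}. {i} \<subseteq> AC c} = f ` Vs i" using colk[OF i] i unfolding AC_def by auto
    then show "ssum t n {i} = int (card (f ` Vs i))" using ss by simp
  qed
  have s2: "\<And>i j. i \<in> {1..t} \<Longrightarrow> j \<in> {1..t} \<Longrightarrow> ssum t n {i, j} = int (card (f ` Vs i \<inter> f ` Vs j))"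
  proof -
    fix i j assume i: "i \<in> {1..t}" and j: "j \<in> {1..t}"
    have "{c\<in>{1..k}. {i, j} \<subseteq> AC c} = f ` Vs i \<inter> f ` Vs j" using colk[OF i] i j unfolding AC_def by auto
    then show "ssum t n {i, j} = int (card (f ` Vs i \<inter> f ` Vs j))" using ss by simp
  qed
  have s2z: "\<And>i j. i \<in> {1..t} \<Longrightarrow> j \<in> {1..t} \<Longrightarrow> ssum t n {i, j} \<noteq> 0 \<Longrightarrow> \<exists>c. c \<in> f ` Vs i \<and> c \<in> f ` Vs j"
  proof -
    fix i j assume i: "i \<in> {1..t}" and j: "j \<in> {1..t}" and "ssum t n {i, j} \<noteq> 0"
    then have "card (f ` Vs i \<inter> f ` Vs j) \<noteq> 0" using s2 by simp
    then show "\<exists>c. c \<in> f ` Vs i \<and> c \<in> f ` Vs j" by (metis card.empty disjoint_iff)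
  qed
  have noninj: "\<And>i. i \<in> {1..t} \<Longrightarrow> ssum t n {i} < int (card (Vs i)) \<Longrightarrow>
       \<exists>u w. u \<in> Vs i \<and> w \<in> Vs i \<and> u \<noteq> w \<and> f u = f w"
  proof -
    fix i assume i: "i \<in> {1..t}" and "ssum t n {i} < int (card (Vs i))"
    then have "card (f ` Vs i) \<noteq> card (Vs i)" using s1 by simp
    then have "\<not> inj_on f (Vs i)" using card_image by blast
    then show "\<exists>u w. u \<in> Vs i \<and> w \<in> Vs i \<and> u \<noteq> w \<and> f u = f w" unfolding inj_on_def by blast
  qed
  have c3: "\<And>x y. card {x, y, x, y} < 3" by (simp add: card_insert_if)
  have "ILP_feasible_assignment E k t Vs n"
    unfolding ILP_feasible_assignment_def
  proof (intro conjI)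
    show "\<forall>A. A \<subseteq> {1..t} \<longrightarrow> (\<exists>i\<in>A. \<exists>j\<in>A. type_adj E Vs i j) \<longrightarrow> n A = 0"
    proof (intro allI impI)
      fix A assume A: "A \<subseteq> {1..t}" and "\<exists>i\<in>A. \<exists>j\<in>A. type_adj E Vs i j"
      then obtain i j where ij: "i \<in> A" "j \<in> A" "type_adj E Vs i j" by blast
      have "{c\<in>{1..k}. AC c = A} = {}"
      proof (rule ccontr)
        assume "{c\<in>{1..k}. AC c = A} \<noteq> {}"
        then obtain c where "AC c = A" by blast
        then have "c \<in> f ` Vs i" "c \<in> f ` Vs j" using ij unfolding AC_def by auto
        then obtain u v where "u \<in> Vs i" "v \<in> Vs j" "f u = f v" by force
        then show False using ij(3) fE unfolding type_adj_def by blast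
      qed
      then show "n A = 0" unfolding n_def by simp
    qed
  next
    have "(\<Sum>A \<in> Pow {1..t}. n A) = ssum t n {}"
      unfolding ssum_def by (rule sum.cong) auto
    moreover have "{c\<in>{1..k}. {} \<subseteq> AC c} = {1..k}" by auto
    ultimately show "(\<Sum>A \<in> Pow {1..t}. n A) \<le> int k" using ss by simp
  next
    show "\<forall>i\<in>{1..t}. clique_type E Vs i \<longrightarrow> ssum t n {i} = int (card (Vs i))"
    proof (intro ballI impI)
      fix i assume i: "i \<in> {1..t}" and "clique_type E Vs i"
      then have "inj_on f (Vs i)" using fE unfolding clique_type_def inj_on_def by blast
      then show "ssum t n {i} = int (card (Vs i))" using s1[OF i] card_image by simp
    qed
  next
    show "\<forall>i\<in>{1..t}. indep_type E Vs i \<longrightarrow>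
        1 \<le> ssum t n {i} \<and> ssum t n {i} \<le> min (int k) (int (card (Vs i)))"
    proof (intro ballI impI)
      fix i assume i: "i \<in> {1..t}"
      have a: "card (f ` Vs i) \<ge> 1" using ne[OF i] fin[OF i]
        by (simp add: Suc_leI card_gt_0_iff)
      have b: "card (f ` Vs i) \<le> k" using card_mono[OF _ colk[OF i]] by simp
      have c: "card (f ` Vs i) \<le> card (Vs i)" using card_image_le fin[OF i] by blast
      show "1 \<le> ssum t n {i} \<and> ssum t n {i} \<le> min (int k) (int (card (Vs i)))"
        using a b c s1[OF i] by simp
    qed
  next
    show "\<forall>i1\<in>{1..t}. \<forall>i2\<in>{1..t}. \<forall>i3\<in>{1..t}. \<forall>i4\<in>{1..t}.
        distinct [i1, i2, i3, i4] \<and> type_adj E Vs i2 i1 \<and> type_adj E Vs i2 i3 \<and>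
        type_adj E Vs i3 i4 \<longrightarrow>
        ssum t n {i1, i3} \<ge> 1 \<longrightarrow> ssum t n {i2, i4} = 0"
    proof (intro ballI impI)
      fix i1 i2 i3 i4 assume i: "i1 \<in> {1..t}" "i2 \<in> {1..t}" "i3 \<in> {1..t}" "i4 \<in> {1..t}"
        and h: "distinct [i1, i2, i3, i4] \<and> type_adj E Vs i2 i1 \<and> type_adj E Vs i2 i3 \<and>
        type_adj E Vs i3 i4" and g: "ssum t n {i1, i3} \<ge> 1"
      show "ssum t n {i2, i4} = 0"
      proof (rule ccontr)
        assume "ssum t n {i2, i4} \<noteq> 0"
        then obtain d where "d \<in> f ` Vs i2" "d \<in> f ` Vs i4" using s2z i by blast
        then obtain b dd where bd: "b \<in> Vs i2" "dd \<in> Vs i4" "f b = d" "f dd = d" by (metis imageE)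
        obtain c where "c \<in> f ` Vs i1" "c \<in> f ` Vs i3" using s2z i g by fastforce
        then obtain a cc where ac: "a \<in> Vs i1" "cc \<in> Vs i3" "f a = c" "f cc = c" by (metis imageE)
        have E: "E a b" "E b cc" "E cc dd" using h ac bd Esym unfolding type_adj_def by blast+
        have D: "distinct [a, b, cc, dd]" using h ac bd disj i by auto
        have "card {f a, f b, f cc, f dd} \<ge> 3" using fP[OF D E] .
        then show False using ac bd c3 by (metis leD)
      qed
    qed
  next
    show "\<forall>i1\<in>{1..t}. \<forall>i2\<in>{1..t}. \<forall>i3\<in>{1..t}.
        distinct [i1, i2, i3] \<and> indep_type E Vs i1 \<and> type_adj E Vs i1 i2 \<and>
        type_adj E Vs i1 i3 \<longrightarrow>
        ssum t n {i1} < int (card (Vs i1)) \<longrightarrow> ssum t n {i2, i3} = 0"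
    proof (intro ballI impI)
      fix i1 i2 i3 assume i: "i1 \<in> {1..t}" "i2 \<in> {1..t}" "i3 \<in> {1..t}"
        and h: "distinct [i1, i2, i3] \<and> indep_type E Vs i1 \<and> type_adj E Vs i1 i2 \<and>
        type_adj E Vs i1 i3" and g: "ssum t n {i1} < int (card (Vs i1))"
      show "ssum t n {i2, i3} = 0"
      proof (rule ccontr)
        assume "ssum t n {i2, i3} \<noteq> 0"
        then obtain d where "d \<in> f ` Vs i2" "d \<in> f ` Vs i3" using s2z i by blast
        then obtain b dd where bd: "b \<in> Vs i2" "dd \<in> Vs i3" "f b = d" "f dd = d" by (metis imageE)
        obtain u w where uw: "u \<in> Vs i1" "w \<in> Vs i1" "u \<noteq> w" "f u = f w" using noninj[OF i(1) g] by blast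
        have E: "E u b" "E b w" "E w dd" using h uw bd Esym unfolding type_adj_def by blast+
        have D: "distinct [u, b, w, dd]" using h uw bd disj i by auto
        have "card {f u, f b, f w, f dd} \<ge> 3" using fP[OF D E] .
        then show False using uw bd c3 by (metis leD)
      qed
    qed
  next
    show "\<forall>i1\<in>{1..t}. \<forall>i2\<in>{1..t}.
        i1 \<noteq> i2 \<and> indep_type E Vs i1 \<and> indep_type E Vs i2 \<and> type_adj E Vs i2 i1 \<longrightarrow>
        ssum t n {i1} < int (card (Vs i1)) \<longrightarrow> ssum t n {i2} = int (card (Vs i2))"
    proof (intro ballI impI)
      fix i1 i2 assume i: "i1 \<in> {1..t}" "i2 \<in> {1..t}"
        and h: "i1 \<noteq> i2 \<and> indep_type E Vs i1 \<and> indep_type E Vs i2 \<and> type_adj E Vs i2 i1"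
        and g: "ssum t n {i1} < int (card (Vs i1))"
      show "ssum t n {i2} = int (card (Vs i2))"
      proof (rule ccontr)
        assume "ssum t n {i2} \<noteq> int (card (Vs i2))"
        moreover have "ssum t n {i2} \<le> int (card (Vs i2))"
          using s1[OF i(2)] card_image_le fin[OF i(2)] by simp
        ultimately have g2: "ssum t n {i2} < int (card (Vs i2))" by simp
        obtain u w where uw: "u \<in> Vs i1" "w \<in> Vs i1" "u \<noteq> w" "f u = f w" using noninj[OF i(1) g] by blast
        obtain x y where xy: "x \<in> Vs i2" "y \<in> Vs i2" "x \<noteq> y" "f x = f y" using noninj[OF i(2) g2] by blast
        have E: "E u x" "E x w" "E w y" using h uw xy Esym unfolding type_adj_def by blast+
        have D: "distinct [u, x, w, y]" using h uw xy disj i by auto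
        have "card {f u, f x, f w, f y} \<ge> 3" using fP[OF D E] .
        then show False using uw xy c3 by (metis leD)
      qed
    qed
  next
    show "\<forall>A. A \<subseteq> {1..t} \<longrightarrow> n A \<ge> 0" unfolding n_def by simp
  qed
  then show ?thesis unfolding ILP_feasible_def by blast
qed

end
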